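(* Neither the inequality $I(a,b)>S\big(A(a,b),G(a,b)\big)$ nor the inequality $I(a,b)<S\big(A(a,b),G(a,b)\big)$ holds for all distinct positive reals $a,b$. On the other hand, for all distinct positive reals $a,b$, writing $A=A(a,b)$, $G=G(a,b)$, $I=I(a,b)$, $Q=Q(a,b)$, one has $$S(Q,G)>A>I\qquad\text{and}\qquad I(Q,G)<A.$$
   Context: For positive reals $x,y$: $A(x,y)=\frac{x+y}{2}$, $G(x,y)=\sqrt{xy}$, root square mean $Q(x,y)=\sqrt{(x^2+y^2)/2}$, $S(x,y)=(x^xy^y)^{1/(x+y)}$, and for $x\neq y$ the identric mean $I(x,y)=\frac{1}{e}\left(\frac{x^x}{y^y}\right)^{1/(x-y)}$. *)

theory Defs
  imports Complex_Main
begin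

definition AM :: "real \<Rightarrow> real \<Rightarrow> real" where
  "AM x y = (x + y) / 2"

definition GM :: "real \<Rightarrow> real \<Rightarrow> real" where
  "GM x y = sqrt (x * y)"

definition QM :: "real \<Rightarrow> real \<Rightarrow> real" where
  "QM x y = sqrt ((x\<^sup>2 + y\<^sup>2) / 2)"

definition SM :: "real \<Rightarrow> real \<Rightarrow> real" where
  "SM x y = ((x powr x) * (y powr y)) powr (1 / (x + y))"

definition IM :: "real \<Rightarrow> real \<Rightarrow> real" where
  "IM x y = (1 / exp 1) * ((x powr x) / (y powr y)) powr (1 / (x - y))"

end

theory Submission imports Defs begin

lemma IM_eq: "0<x \<Longrightarrow> 0<y \<Longrightarrow> IM x y = exp((x*ln x - y*ln y)/(x-y) - 1)"
  by (simp add: IM_def powr_def exp_diff ln_div exp_minus field_simps)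

lemma SM_eq: "0<x \<Longrightarrow> 0<y \<Longrightarrow> SM x y = exp((x*ln x + y*ln y)/(x+y))"
  by (simp add: SM_def powr_def exp_add ln_mult field_simps flip: exp_add)

lemma key_convex:
  fixes f f' f'' :: "real \<Rightarrow> real"
  assumes "y < x" "f y = 0" "f' y = 0"
    and d1: "\<And>t. y \<le> t \<Longrightarrow> t \<le> x \<Longrightarrow> (f has_real_derivative f' t) (at t)"
    and d2: "\<And>t. y \<le> t \<Longrightarrow> t \<le> x \<Longrightarrow> (f' has_real_derivative f'' t) (at t)"
    and pos: "\<And>t. y < t \<Longrightarrow> t < x \<Longrightarrow> f'' t > 0"
  shows "f x > 0"
proof -
  have fp: "f' z > 0" if "y < z" "z \<le> x" for z
  proof -
    have "\<exists>w>y. w < z \<and> f' z - f' y = (z - y) * f'' w"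
      by (rule MVT2) (use that d2 in auto)
    then obtain w where w: "y < w" "w < z" "f' z - f' y = (z - y) * f'' w" by auto
    have "f'' w > 0" using pos w that by auto
    then show ?thesis using w assms that by simp
  qed
  have "\<exists>z>y. z < x \<and> f x - f y = (x - y) * f' z"
    by (rule MVT2) (use assms d1 in auto)
  then obtain z where z: "y < z" "z < x" "f x - f y = (x - y) * f' z" by auto
  then show ?thesis using fp[of z] assms by simp
qed

lemma L1:
  fixes x y :: real assumes "0 < y" "y < x"
  shows "x * ln x - y * ln y < (x - y) * (ln ((x + y) / 2) + 1)"
proof -
  define f where "f t = (t-y)*(ln((t+y)/2)+1) - t*ln t + y*ln y" for t
  define f' where "f' t = ln((t+y)/2) + (t-y)/(t+y) - ln t" for t
  define f'' where "f'' t = 1/(t+y) + 2*y/(t+y)^2 - 1/t" for t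
  have "f x > 0"
  proof (rule key_convex[of y x f f' f''])
    show "y < x" "f y = 0" "f' y = 0" using assms by (auto simp: f_def f'_def)
    show "(f has_real_derivative f' t) (at t)" if "y \<le> t" "t \<le> x" for t
    proof -
      have p: "t > 0" "t + y > 0" using that assms by auto
      show ?thesis
      unfolding f_def f'_def using p
      apply (auto intro!: derivative_eq_intros) apply (auto simp: divide_simps add_pos_pos) apply (auto simp: algebra_simps power2_eq_square) done
    qed
    show "(f' has_real_derivative f'' t) (at t)" if "y \<le> t" "t \<le> x" for t
      unfolding f'_def f''_def using that assms
      apply (auto intro!: derivative_eq_intros) apply (auto simp: divide_simps add_pos_pos) apply (auto simp: algebra_simps power2_eq_square) done
    show "f'' t > 0" if "y < t" "t < x" for t
    proof -
      have p: "t > 0" "t + y > 0" using that assms by auto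
      have "f'' t = y*(t-y)/(t*(t+y)^2)" using p unfolding f''_def
        by (simp add: divide_simps) (simp add: algebra_simps power2_eq_square)
      then show ?thesis using that assms by simp
    qed
  qed
  then show ?thesis by (simp add: f_def)
qed

lemma L2:
  fixes x y :: real assumes "0 < y" "y < x"
  shows "(x + y) / 2 * ln ((x^2 + y^2) / 2) < x * ln x + y * ln y"
proof -
  define f where "f t = t*ln t + y*ln y - (t+y)/2 * ln((t^2+y^2)/2)" for t
  define f' where "f' t = ln t + 1 - ln((t^2+y^2)/2)/2 - (t+y)*t/(t^2+y^2)" for t
  define f'' where "f'' t = 1/t - t/(t^2+y^2) - y*(y^2+2*t*y-t^2)/(t^2+y^2)^2" for t
  have "f x > 0"
  proof (rule key_convex[of y x f f' f''])
    show "y < x" "f y = 0" "f' y = 0" using assms by (auto simp: f_def f'_def power2_eq_square ln_mult)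
    show "(f has_real_derivative f' t) (at t)" if "y \<le> t" "t \<le> x" for t
    proof -
      have p: "t > 0" "t*t + y*y > 0" using that assms by (auto intro: add_pos_pos)
      show ?thesis
      unfolding f_def f'_def using p
      apply (auto intro!: derivative_eq_intros) apply (auto simp: divide_simps add_pos_pos) apply (auto simp: algebra_simps power2_eq_square) done
    qed
    show "(f' has_real_derivative f'' t) (at t)" if "y \<le> t" "t \<le> x" for t
    proof -
      have p: "t > 0" "t*t + y*y > 0" "t*(t*4)+y*(y*4) > 0" using that assms by (auto intro: add_pos_pos)
      show ?thesis
      unfolding f'_def f''_def using p
      apply (auto intro!: derivative_eq_intros) apply (auto simp: divide_simps add_pos_pos) apply (auto simp: algebra_simps power2_eq_square) done
    qed
    show "f'' t > 0" if "y < t" "t < x" for t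
    proof -
      have p: "t > 0" "t^2 + y^2 > 0" using that assms by (auto intro: add_pos_pos)
      have "f'' t = y*(t+y)*(t-y)^2/(t*(t^2+y^2)^2)" using p unfolding f''_def
        by (simp add: divide_simps) (simp add: algebra_simps power2_eq_square)
      then show ?thesis using that assms by simp
    qed
  qed
  then show ?thesis by (simp add: f_def)
qed

lemma IM_sym: "0<x \<Longrightarrow> 0<y \<Longrightarrow> IM x y = IM y x"
proof -
  assume "0<x" "0<y"
  then show ?thesis
    by (simp add: IM_eq) (metis minus_diff_eq minus_divide_divide)
qed

lemma I_lt_A:
  assumes "0 < x" "0 < y" "x \<noteq> y" shows "IM x y < AM x y"
proof -
  have gen: "IM x y < AM x y" if "0 < y" "y < x" for x y :: real
  proof -
    have "x * ln x - y * ln y < (x - y) * (ln ((x + y) / 2) + 1)" using L1 that by blast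
    then have "(x * ln x - y * ln y)/(x-y) - 1 < ln ((x + y) / 2)"
      using that by (simp add: divide_simps algebra_simps)
    then have "IM x y < exp (ln ((x + y) / 2))"
      using that by (simp add: IM_eq del: exp_ln)
    then show ?thesis using that by (simp add: AM_def)
  qed
  show ?thesis
  proof (cases "y < x")
    case True then show ?thesis using gen assms by blast
  next
    case False then have "x < y" using assms by auto
    then show ?thesis using gen[of x y] assms IM_sym[of x y] by (simp add: AM_def add.commute)
  qed
qed

lemma S_gt_Q:
  assumes "0 < x" "0 < y" "x \<noteq> y" shows "SM x y > sqrt ((x^2 + y^2) / 2)"
proof -
  have gen: "SM x y > sqrt ((x^2 + y^2) / 2)" if "0 < y" "y < x" for x y :: real
  proof -
    have q: "(x^2 + y^2) / 2 > 0" using that by (simp add: add_pos_pos)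
    have "(x + y) / 2 * ln ((x^2 + y^2) / 2) < x * ln x + y * ln y" using L2 that by blast
    then have "ln ((x^2 + y^2) / 2) / 2 < (x * ln x + y * ln y)/(x+y)"
      using that by (simp add: divide_simps algebra_simps)
    then have "exp (ln ((x^2 + y^2) / 2) / 2) < SM x y"
      using that by (simp add: SM_eq del: exp_ln)
    moreover have "exp (ln ((x^2 + y^2) / 2) / 2) = sqrt ((x^2 + y^2) / 2)"
      using q powr_half_sqrt[of "(x^2 + y^2) / 2"] that by (simp add: powr_def)
    ultimately show ?thesis by simp
  qed
  show ?thesis
  proof (cases "y < x")
    case True then show ?thesis using gen assms by blast
  next
    case False then have "x < y" using assms by auto
    then show ?thesis using gen[of x y] assms by (simp add: SM_def add.commute mult.commute)
  qed
qed

lemma ex_big: "IM 9 1 > SM (AM 9 1) (GM 9 1)"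
proof -
  have g: "GM 9 1 = 3" by (simp add: GM_def)
  have a: "AM 9 1 = 5" by (simp add: AM_def)
  have e1: "exp (1/16) \<le> (273/256::real)"
    using exp_bound[of "1/16"] by (simp add: power2_eq_square)
  have "exp (8::real) = exp (1/16) ^ 128"
    using exp_of_nat_mult[of 128 "1/16::real"] by simp
  also have "\<dots> \<le> (273/256) ^ 128" by (rule power_mono[OF e1]) simp
  also have "\<dots> < (3::real)^15 / 5^5" by (simp add: power_divide)
  finally have "exp 8 < (3::real)^15 / 5^5" .
  then have "8 < ln ((3::real)^15 / 5^5)"
    by (metis exp_less_cancel_iff exp_ln divide_pos_pos zero_less_power zero_less_numeral)
  then have h: "8 < 15 * ln (3::real) - 5 * ln 5"
    using ln_realpow[of "3::real" 15] ln_realpow[of "5::real" 5] by (simp add: ln_div)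
  have l9: "ln (9::real) = 2 * ln 3"
    using ln_realpow[of 3 2] by simp
  have "(5 * ln 5 + 3 * ln 3) / (5 + 3) < (9 * ln 9 - 1 * ln 1) / (9 - 1) - (1::real)"
    using h l9 by simp
  then show ?thesis unfolding g a
    by (simp add: IM_eq SM_eq del: ln_one)
qed

lemma ex_small: "IM 16384 1 < SM (AM 16384 1) (GM 16384 1)"
proof -
  define L where "L = ln (2::real)"
  have g: "GM 16384 1 = 128" by (simp add: GM_def real_sqrt_unique)
  have a: "AM 16384 1 = 16385/2" by (simp add: AM_def)
  have L1': "ln (4/3::real) \<le> 1/3" using ln_le_minus_one[of "4/3::real"] by simp
  have L2': "ln (3/2::real) \<le> 1/2" using ln_le_minus_one[of "3/2::real"] by simp
  have "L = ln (4/3) + ln (3/2)" unfolding L_def using ln_mult[of "4/3" "3/2::real"] by simp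
  then have Lb: "L \<le> 5/6" using L1' L2' by simp
  have Lp: "L > 0" unfolding L_def by simp
  have l14: "ln (16384::real) = 14 * L" using ln_realpow[of 2 14] unfolding L_def by simp
  have l7: "ln (128::real) = 7 * L" using ln_realpow[of 2 7] unfolding L_def by simp
  have "ln (8192::real) < ln (16385/2)" by simp
  moreover have "ln (8192::real) = 13 * L" using ln_realpow[of 2 13] unfolding L_def by simp
  ultimately have la: "13 * L < ln (16385/2::real)" by simp
  have "(16384 * ln 16384 - 1 * ln 1) / (16384 - 1) - 1 <
        ((16385/2) * ln (16385/2) + 128 * ln 128) / (16385/2 + (128::real))"
    using la Lb Lp unfolding l14 l7 by (simp add: divide_simps)
  then show ?thesis unfolding g a
    by (simp add: IM_eq SM_eq del: ln_one)
qed

theorem theorem4: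
  shows "\<not> (\<forall>a b::real. 0 < a \<longrightarrow> 0 < b \<longrightarrow> a \<noteq> b \<longrightarrow>
              IM a b > SM (AM a b) (GM a b)) \<and>
         \<not> (\<forall>a b::real. 0 < a \<longrightarrow> 0 < b \<longrightarrow> a \<noteq> b \<longrightarrow>
              IM a b < SM (AM a b) (GM a b)) \<and>
         (\<forall>a b::real. 0 < a \<longrightarrow> 0 < b \<longrightarrow> a \<noteq> b \<longrightarrow>
              SM (QM a b) (GM a b) > AM a b \<and> AM a b > IM a b \<and>
              IM (QM a b) (GM a b) < AM a b)"
proof (intro conjI allI impI)
  show "\<not> (\<forall>a b::real. 0 < a \<longrightarrow> 0 < b \<longrightarrow> a \<noteq> b \<longrightarrow>
              IM a b > SM (AM a b) (GM a b))"
  proof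
    assume H: "\<forall>a b::real. 0 < a \<longrightarrow> 0 < b \<longrightarrow> a \<noteq> b \<longrightarrow> IM a b > SM (AM a b) (GM a b)"
    have "IM 16384 1 > SM (AM 16384 1) (GM 16384 1)" using H[rule_format, of 16384 1] by simp
    then show False using ex_small by simp
  qed
  show "\<not> (\<forall>a b::real. 0 < a \<longrightarrow> 0 < b \<longrightarrow> a \<noteq> b \<longrightarrow>
              IM a b < SM (AM a b) (GM a b))"
  proof
    assume H: "\<forall>a b::real. 0 < a \<longrightarrow> 0 < b \<longrightarrow> a \<noteq> b \<longrightarrow> IM a b < SM (AM a b) (GM a b)"
    have "IM 9 1 < SM (AM 9 1) (GM 9 1)" using H[rule_format, of 9 1] by simp
    then show False using ex_big by simp
  qed
  fix a b :: real assume ab: "0 < a" "0 < b" "a \<noteq> b"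
  show "AM a b > IM a b" using I_lt_A ab by blast
  define Q where "Q = QM a b"
  define G where "G = GM a b"
  have Q2: "Q^2 = (a^2+b^2)/2" unfolding Q_def QM_def by (simp add: add_nonneg_nonneg)
  have G2: "G^2 = a*b" unfolding G_def GM_def using ab by simp
  have Qp: "Q > 0" unfolding Q_def QM_def using ab by (simp add: add_pos_pos)
  have Gp: "G > 0" unfolding G_def GM_def using ab by simp
  have "Q^2 - G^2 = (a-b)^2/2" using Q2 G2 by (simp add: power2_eq_square algebra_simps)
  moreover have "(a-b)^2 > 0" using ab by simp
  ultimately have "Q^2 \<noteq> G^2" by auto
  then have QG: "Q \<noteq> G" by auto
  have A: "sqrt ((Q^2 + G^2)/2) = AM a b"
  proof -
    have "(Q^2 + G^2)/2 = (AM a b)^2" using Q2 G2 by (simp add: AM_def power2_eq_square algebra_simps)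
    then show ?thesis using ab by (simp add: AM_def)
  qed
  show "SM (QM a b) (GM a b) > AM a b"
    using S_gt_Q[OF Qp Gp QG] A unfolding Q_def G_def by simp
  have "IM Q G < AM Q G" using I_lt_A[OF Qp Gp QG] .
  also have "AM Q G \<le> sqrt ((Q^2 + G^2)/2)"
  proof -
    have "(AM Q G)^2 \<le> (Q^2 + G^2)/2"
      using zero_le_power2[of "G-Q"] by (simp add: AM_def power2_eq_square field_simps)
    then show ?thesis using real_le_rsqrt by blast
  qed
  finally show "IM (QM a b) (GM a b) < AM a b" using A unfolding Q_def G_def by simp
qed

end
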